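(* Let $G=(V,D,B)$ be a mixed graph, $v\in V$, and $Y\subseteq V\setminus(\{v\}\cup\mathrm{sib}(v))$ with $|Y|=|\mathrm{pa}(v)|$. For $(\Lambda,\Omega)\in\Theta$ with $\Sigma=\phi_G(\Lambda,\Omega)$ let $\mathbf{J}=[(I-\Lambda)^T\Sigma]_{Y,\mathrm{pa}(v)}$ (the submatrix with rows $Y$ and columns $\mathrm{pa}(v)$). If $\mathbf{J}$ is generically invertible, i.e. $\det\mathbf{J}$ is not identically zero as a function of $(\Lambda,\Omega)\in\Theta$, then $Y$ satisfies the half-trek criterion with respect to $v$.
   Context: A mixed graph is $G=(V,D,B)$ with $V=[m]$, $D$ directed edges $v\to w$, $B$ symmetric bidirected edges $v\leftrightarrow w$, no self-loops. $\mathrm{pa}(v)=\{w:w\to v\in D\}$, $\mathrm{sib}(v)=\{w:w\leftrightarrow v\in B\}$. $\mathbb{R}^D_{\mathrm{reg}}$: real $m\times m$ $\Lambda$ with $\lambda_{vw}=0$ for $v\to w\notin D$ and $I-\Lambda$ invertible; $\mathrm{PD}(B)$: positive definite symmetric $\Omega$ with $\omega_{vw}=0$ for $v\ne w$, $v\leftrightarrow w\notin B$; $\Theta=\mathbb{R}^D_{\mathrm{reg}}\times\mathrm{PD}(B)$; $\phi_G(\Lambda,\Omega)=(I-\Lambda)^{-T}\Omega(I-\Lambda)^{-1}$. A half-trek from $y$ to $w$ is a path $y\leftrightarrow w_0\to w_1\to\cdots\to w_r=w$ (left side $\{y\}$, right side $\{w_0,\dots,w_r\}$) or $y\to w_1\to\cdots\to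 w_r=w$, $r\ge0$ (left side $\{y\}$, right side $\{y,w_1,\dots,w_r\}$); nodes may repeat. A system of half-treks from $X$ to $Y$: half-treks with distinct sources forming $X$ and distinct targets forming $Y$; no sided intersection: pairwise disjoint left sides and pairwise disjoint right sides. $Y$ satisfies the half-trek criterion w.r.t. $v$ if $|Y|=|\mathrm{pa}(v)|$, $Y\cap(\{v\}\cup\mathrm{sib}(v))=\emptyset$, and there is a system of half-treks with no sided intersection from $Y$ to $\mathrm{pa}(v)$. *)

theory Defs
  imports "Jordan_Normal_Form.DL_Submatrix" "Jordan_Normal_Form.Determinant"
begin

text \<open>Mixed graph on vertex set V = {0..<m}. D: directed edges (v,w) meaning v -> w;
 B: bidirected edges, stored symmetrically.\<close>

definition mixed_graph :: "nat \<Rightarrow> (nat \<times> nat) set \<Rightarrow> (nat \<times> nat) set \<Rightarrow> bool" where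
  "mixed_graph m D B \<longleftrightarrow>
     D \<subseteq> {0..<m} \<times> {0..<m} \<and> B \<subseteq> {0..<m} \<times> {0..<m} \<and>
     (\<forall>v. (v,v) \<notin> D) \<and> (\<forall>v. (v,v) \<notin> B) \<and> (\<forall>v w. (v,w) \<in> B \<longrightarrow> (w,v) \<in> B)"

definition pa :: "(nat \<times> nat) set \<Rightarrow> nat \<Rightarrow> nat set" where
  "pa D v = {w. (w,v) \<in> D}"

definition sib :: "(nat \<times> nat) set \<Rightarrow> nat \<Rightarrow> nat set" where
  "sib B v = {w. (w,v) \<in> B}"

definition reg_D :: "nat \<Rightarrow> (nat \<times> nat) set \<Rightarrow> real mat set" where
  "reg_D m D = {L. L \<in> carrier_mat m m \<and>
      (\<forall>v<m. \<forall>w<m. (v,w) \<notin> D \<longrightarrow> L $$ (v,w) = 0) \<and>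
      invertible_mat (1\<^sub>m m - L)}"

definition PD_B :: "nat \<Rightarrow> (nat \<times> nat) set \<Rightarrow> real mat set" where
  "PD_B m B = {W. W \<in> carrier_mat m m \<and> transpose_mat W = W \<and>
      (\<forall>x \<in> carrier_vec m. x \<noteq> 0\<^sub>v m \<longrightarrow> x \<bullet> (W *\<^sub>v x) > 0) \<and>
      (\<forall>v<m. \<forall>w<m. v \<noteq> w \<and> (v,w) \<notin> B \<longrightarrow> W $$ (v,w) = 0)}"

definition Theta :: "nat \<Rightarrow> (nat \<times> nat) set \<Rightarrow> (nat \<times> nat) set \<Rightarrow> (real mat \<times> real mat) set" where
  "Theta m D B = reg_D m D \<times> PD_B m B"

definition mat_inv :: "nat \<Rightarrow> real mat \<Rightarrow> real mat" where
  "mat_inv m A = (SOME C. C \<in> carrier_mat m m \<and> A * C = 1\<^sub>m m \<and> C * A = 1\<^sub>m m)"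

definition phi :: "nat \<Rightarrow> real mat \<Rightarrow> real mat \<Rightarrow> real mat" where
  "phi m L W = transpose_mat (mat_inv m (1\<^sub>m m - L)) * W * mat_inv m (1\<^sub>m m - L)"

text \<open>A half-trek with source y is a pair (bi, p) where p is a nonempty node list
 forming a directed walk. If bi: the path is y <-> p!0 -> p!1 -> ... (right side = set p).
 If not bi: p!0 = y and the path is y -> p!1 -> ... (right side = set p, containing y). Nodes may repeat.\<close>

definition directed_walk :: "(nat \<times> nat) set \<Rightarrow> nat list \<Rightarrow> bool" where
  "directed_walk D p \<longleftrightarrow> (\<forall>i. Suc i < length p \<longrightarrow> (p ! i, p ! Suc i) \<in> D)"

definition is_half_trek :: "(nat \<times> nat) set \<Rightarrow> (nat \<times> nat) set \<Rightarrow> nat \<Rightarrow> nat \<Rightarrow> bool \<times> nat list \<Rightarrow> bool" where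
  "is_half_trek D B y w h \<longleftrightarrow>
     (let bi = fst h; p = snd h in
       p \<noteq> [] \<and> directed_walk D p \<and> last p = w \<and>
       (if bi then (y, hd p) \<in> B else hd p = y))"

definition left_side :: "nat \<Rightarrow> bool \<times> nat list \<Rightarrow> nat set" where
  "left_side y h = {y}"

definition right_side :: "nat \<Rightarrow> bool \<times> nat list \<Rightarrow> nat set" where
  "right_side y h = set (snd h)"

definition nsi_half_trek_system :: "(nat \<times> nat) set \<Rightarrow> (nat \<times> nat) set \<Rightarrow> nat set \<Rightarrow> nat set \<Rightarrow> bool" where
  "nsi_half_trek_system D B X Y \<longleftrightarrow>
     (\<exists>h tgt. bij_betw tgt X Y \<and> (\<forall>x\<in>X. is_half_trek D B x (tgt x) (h x)) \<and>
        (\<forall>x1\<in>X. \<forall>x2\<in>X. x1 \<noteq> x2 \<longrightarrow>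
            left_side x1 (h x1) \<inter> left_side x2 (h x2) = {} \<and>
            right_side x1 (h x1) \<inter> right_side x2 (h x2) = {}))"

definition HTC :: "(nat \<times> nat) set \<Rightarrow> (nat \<times> nat) set \<Rightarrow> nat \<Rightarrow> nat set \<Rightarrow> bool" where
  "HTC D B v Y \<longleftrightarrow> card Y = card (pa D v) \<and> Y \<inter> ({v} \<union> sib B v) = {} \<and>
     nsi_half_trek_system D B Y (pa D v)"

end

theory Submission
  imports Defs
begin

lemma perm_return:
  fixes p :: "nat \<Rightarrow> nat"
  assumes perm: "p permutes {0..<N}" and x: "x < N"
  shows "\<exists>r>0. (p^^r) x = x"
proof -
  have bij: "bij p" using perm by (rule permutes_bij)
  have inN: "(p^^s) x < N" for s
  proof (induction s)
    case 0 then show ?case using x by simp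
  next
    case (Suc s) then show ?case using permutes_in_image[OF perm] by auto
  qed
  have "\<not> inj_on (\<lambda>s. (p^^s) x) {0..N}"
  proof
    assume "inj_on (\<lambda>s. (p^^s) x) {0..N}"
    then have "card ((\<lambda>s. (p^^s) x) ` {0..N}) = card {0..N}" by (rule card_image)
    moreover have "(\<lambda>s. (p^^s) x) ` {0..N} \<subseteq> {0..<N}" using inN by auto
    then have "card ((\<lambda>s. (p^^s) x) ` {0..N}) \<le> N" using card_mono[of "{0..<N}"] by fastforce
    ultimately show False by simp
  qed
  then obtain s1 s2 where s: "s1 \<noteq> s2" "(p^^s1) x = (p^^s2) x" unfolding inj_on_def by auto
  have main: "\<exists>r>0. (p^^r) x = x" if "a < b" "(p^^a) x = (p^^b) x" for a b
  proof -
    have "(p^^b) x = (p^^a) ((p^^(b-a)) x)" using that(1)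
      by (metis funpow_add le_add_diff_inverse less_imp_le comp_apply)
    then have "(p^^a) x = (p^^a) ((p^^(b-a)) x)" using that(2) by simp
    moreover have "inj (p^^a)" using bij_fn[OF bij] bij_is_inj by blast
    ultimately have "(p^^(b-a)) x = x" by (metis injD)
    then show ?thesis using that(1) by (intro exI[of _ "b-a"]) auto
  qed
  show ?thesis
  proof (cases "s1 < s2")
    case True then show ?thesis using main s by blast
  next
    case False then have "s2 < s1" using s by auto
    then show ?thesis using main s by metis
  qed
qed

lemma exit_time:
  fixes p :: "nat \<Rightarrow> nat"
  assumes perm: "p permutes {0..<m+n}" and into: "\<forall>k<n. p (m+k) < m" and k: "k<n"
  defines "t \<equiv> LEAST s. 0 < s \<and> m \<le> (p^^s) (m+k)"
  shows "2 \<le> t" "m \<le> (p^^t)(m+k)" "\<And>s. 0<s \<Longrightarrow> s<t \<Longrightarrow> (p^^s)(m+k) < m"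
proof -
  obtain r where r: "r>0" "(p^^r) (m+k) = m+k" using perm_return[OF perm, of "m+k"] k by auto
  have ex: "0 < r \<and> m \<le> (p^^r) (m+k)" using r by simp
  have L: "0 < t \<and> m \<le> (p^^t) (m+k)" unfolding t_def by (rule LeastI[of _ r], rule ex)
  then show "m \<le> (p^^t)(m+k)" by simp
  show lt: "(p^^s)(m+k) < m" if "0<s" "s<t" for s
    using not_less_Least[of s "\<lambda>s. 0 < s \<and> m \<le> (p^^s) (m+k)"] that unfolding t_def[symmetric] by auto
  have "t \<noteq> 1" using L into k by auto
  then show "2 \<le> t" using L by linarith
qed

lemma orbit_disjoint:
  fixes p :: "nat \<Rightarrow> nat"
  assumes perm: "p permutes {0..<m+n}"
    and lt1: "\<And>s. 0<s \<Longrightarrow> s<t1 \<Longrightarrow> (p^^s)(m+k1) < m"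
    and lt2: "\<And>s. 0<s \<Longrightarrow> s<t2 \<Longrightarrow> (p^^s)(m+k2) < m"
    and a: "0<a" "a<t1" and b: "0<b" "b<t2"
    and eq: "(p^^a)(m+k1) = (p^^b)(m+k2)"
  shows "k1 = k2"
proof -
  have bij: "bij p" using perm by (rule permutes_bij)
  have gen: "k1 = k2" if ab: "a \<le> b" "(p^^a)(m+k1) = (p^^b)(m+k2)" "0<b" "b<t2"
     and lt2: "\<And>s. 0<s \<Longrightarrow> s<t2 \<Longrightarrow> (p^^s)(m+k2) < m" for a b k1 k2 t2
  proof -
    have "(p^^b) (m+k2) = (p^^a) ((p^^(b-a)) (m+k2))" using ab(1)
      by (metis funpow_add le_add_diff_inverse comp_apply)
    moreover have "inj (p^^a)" using bij_fn[OF bij] bij_is_inj by blast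
    ultimately have e: "m+k1 = (p^^(b-a)) (m+k2)" using ab(2) by (metis injD)
    show ?thesis
    proof (cases "a = b")
      case True then show ?thesis using e by simp
    next
      case False
      then have "(p^^(b-a)) (m+k2) < m" using ab by (intro lt2) auto
      then show ?thesis using e by simp
    qed
  qed
  show ?thesis
  proof (cases "a \<le> b")
    case True then show ?thesis using gen[OF True eq b lt2] by blast
  next
    case False then have "b \<le> a" by simp
    then show ?thesis using gen[OF \<open>b\<le>a\<close> eq[symmetric] a lt1] by simp
  qed
qed

lemma block_det_nonzero:
  fixes A M Bm Cm :: "real mat"
  assumes Ac: "A \<in> carrier_mat m m" and Mc: "M \<in> carrier_mat m m" and AM: "A * M = 1\<^sub>m m"
    and Bc: "Bm \<in> carrier_mat m n" and Cc: "Cm \<in> carrier_mat n m"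
    and dJ: "det (Cm * (M * Bm)) \<noteq> 0"
  shows "det (four_block_mat A Bm Cm (0\<^sub>m n n)) \<noteq> 0"
proof
  assume N0: "det (four_block_mat A Bm Cm (0\<^sub>m n n)) = 0"
  have "det A * det M = 1" using det_mult[OF Ac Mc] AM by simp
  then have dA: "det A \<noteq> 0" by auto
  define T where "T = four_block_mat (1\<^sub>m m) ((-1) \<cdot>\<^sub>m (M * Bm)) (0\<^sub>m n m) (1\<^sub>m n)"
  have MB: "M * Bm \<in> carrier_mat m n" using Mc Bc by simp
  have Nc: "four_block_mat A Bm Cm (0\<^sub>m n n) \<in> carrier_mat (m+n) (m+n)" using Ac by simp
  have Tc: "T \<in> carrier_mat (m+n) (m+n)" unfolding T_def by simp
  have prod: "four_block_mat A Bm Cm (0\<^sub>m n n) * T =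
     four_block_mat (A * 1\<^sub>m m + Bm * 0\<^sub>m n m) (A * ((-1) \<cdot>\<^sub>m (M * Bm)) + Bm * 1\<^sub>m n)
       (Cm * 1\<^sub>m m + 0\<^sub>m n n * 0\<^sub>m n m) (Cm * ((-1) \<cdot>\<^sub>m (M * Bm)) + 0\<^sub>m n n * 1\<^sub>m n)"
    unfolding T_def
    by (rule mult_four_block_mat[OF Ac Bc Cc zero_carrier_mat one_carrier_mat smult_carrier_mat[OF MB] zero_carrier_mat one_carrier_mat])
  have e1: "A * 1\<^sub>m m + Bm * 0\<^sub>m n m = A" using Ac Bc by simp
  have "A * ((-1) \<cdot>\<^sub>m (M * Bm)) = (-1) \<cdot>\<^sub>m Bm"
  proof -
    have "A * ((-1) \<cdot>\<^sub>m (M * Bm)) = (-1) \<cdot>\<^sub>m (A * (M * Bm))" using mult_smult_distrib[OF Ac MB] .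
    also have "A * (M * Bm) = (A * M) * Bm" using assoc_mult_mat[OF Ac Mc Bc] by simp
    finally show ?thesis using AM Bc by simp
  qed
  then have e2: "A * ((-1) \<cdot>\<^sub>m (M * Bm)) + Bm * 1\<^sub>m n = 0\<^sub>m m n"
    using Bc by (intro eq_matI) auto
  have e3: "Cm * 1\<^sub>m m + 0\<^sub>m n n * 0\<^sub>m n m = Cm" using Cc by simp
  have e4: "Cm * ((-1) \<cdot>\<^sub>m (M * Bm)) + 0\<^sub>m n n * 1\<^sub>m n = (-1) \<cdot>\<^sub>m (Cm * (M * Bm))"
    using mult_smult_distrib[OF Cc MB] Cc MB by simp
  have "det (four_block_mat A Bm Cm (0\<^sub>m n n) * T) = det A * det ((-1) \<cdot>\<^sub>m (Cm * (M * Bm)))"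
    unfolding prod e1 e2 e3 e4
    by (rule det_four_block_mat_upper_right_zero[OF Ac]) (use Cc MB in auto)
  also have "\<dots> \<noteq> 0" using dA dJ by simp
  finally show False using det_mult[OF Nc Tc] N0 by simp
qed

theorem mainTheorem14:
  fixes m :: nat and D B :: "(nat \<times> nat) set" and v :: nat and Y :: "nat set"
  assumes "mixed_graph m D B"
    and "v < m"
    and "Y \<subseteq> {0..<m} - ({v} \<union> sib B v)"
    and "card Y = card (pa D v)"
    and "\<exists>(L, W) \<in> Theta m D B.
           det (submatrix (transpose_mat (1\<^sub>m m - L) * phi m L W) Y (pa D v)) \<noteq> 0"
  shows "HTC D B v Y"
proof -
  define P where "P = pa D v"
  define n where "n = card Y"
  have Psub: "P \<subseteq> {0..<m}" using assms(1) unfolding mixed_graph_def P_def pa_def by auto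
  have Ysub: "Y \<subseteq> {0..<m}" using assms(3) by auto
  have finY: "finite Y" using Ysub finite_subset by blast
  have finP: "finite P" using Psub finite_subset by blast
  have cardP: "card P = n" using assms(4) unfolding P_def n_def by simp
  have cY: "{i. i < m \<and> i \<in> Y} = Y" using Ysub by auto
  have cP: "{i. i < m \<and> i \<in> P} = P" using Psub by auto
  from assms(5) obtain L W where LW: "(L, W) \<in> Theta m D B"
    and dJ0: "det (submatrix (transpose_mat (1\<^sub>m m - L) * phi m L W) Y P) \<noteq> 0"
    unfolding P_def by auto
  have Lc: "L \<in> carrier_mat m m" and Lz: "\<forall>v<m. \<forall>w<m. (v,w) \<notin> D \<longrightarrow> L $$ (v,w) = 0"
    and Linv: "invertible_mat (1\<^sub>m m - L)"
    using LW unfolding Theta_def reg_D_def by auto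
  have Wc: "W \<in> carrier_mat m m" and Wz: "\<forall>v<m. \<forall>w<m. v \<noteq> w \<and> (v,w) \<notin> B \<longrightarrow> W $$ (v,w) = 0"
    using LW unfolding Theta_def PD_B_def by auto
  define A where "A = 1\<^sub>m m - L"
  have Ac: "A \<in> carrier_mat m m" unfolding A_def using Lc unfolding carrier_mat_def by simp
  from Linv obtain C where C1: "A * C = 1\<^sub>m (dim_row A)" and C2: "C * A = 1\<^sub>m (dim_row C)"
    unfolding A_def[symmetric] invertible_mat_def inverts_mat_def by blast
  have Cc: "C \<in> carrier_mat m m"
  proof -
    have "dim_col (A * C) = dim_col (1\<^sub>m (dim_row A))" using C1 by simp
    then have 1: "dim_col C = m" using Ac by simp
    have "dim_col (C * A) = dim_col (1\<^sub>m (dim_row C))" using C2 by simp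
    then have "dim_row C = m" using Ac by simp
    then show ?thesis using 1 by auto
  qed
  have exM: "\<exists>C. C \<in> carrier_mat m m \<and> A * C = 1\<^sub>m m \<and> C * A = 1\<^sub>m m"
    using Cc C1 C2 Ac by auto
  define M where "M = mat_inv m A"
  have Mall: "M \<in> carrier_mat m m \<and> A * M = 1\<^sub>m m \<and> M * A = 1\<^sub>m m"
    unfolding M_def mat_inv_def by (rule someI_ex[OF exM])
  then have Mc: "M \<in> carrier_mat m m" and AM: "A * M = 1\<^sub>m m" and MA: "M * A = 1\<^sub>m m" by auto
  have phiE: "phi m L W = transpose_mat M * W * M" unfolding phi_def M_def A_def ..
  have key: "transpose_mat A * phi m L W = W * M"
  proof -
    have "transpose_mat A * (transpose_mat M * W * M) = transpose_mat A * (transpose_mat M * (W * M))"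
      using assoc_mult_mat[of "transpose_mat M" m m W m M m] Mc Wc by simp
    also have "\<dots> = (transpose_mat A * transpose_mat M) * (W * M)"
      using assoc_mult_mat[of "transpose_mat A" m m "transpose_mat M" m "W*M" m] Ac Mc Wc by simp
    also have "transpose_mat A * transpose_mat M = transpose_mat (M * A)"
      using transpose_mult[OF Mc Ac] by simp
    also have "\<dots> = 1\<^sub>m m" using MA by simp
    finally show ?thesis using phiE Wc Mc by simp
  qed
  define J where "J = submatrix (W * M) Y P"
  have dJ: "det J \<noteq> 0" using dJ0 key unfolding J_def A_def by simp
  have pickP: "pick P j \<in> P" if "j < n" for j using pick_in_set that cardP by metis
  have pickY: "pick Y i \<in> Y" if "i < n" for i using pick_in_set that n_def by metis
  define Bm where "Bm = mat m n (\<lambda>(i,j). if i = pick P j then (1::real) else 0)"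
  define Cm where "Cm = mat n m (\<lambda>(i,j). W $$ (pick Y i, j))"
  have Bc: "Bm \<in> carrier_mat m n" unfolding Bm_def by simp
  have Cmc: "Cm \<in> carrier_mat n m" unfolding Cm_def by simp
  have MBe: "(M * Bm) $$ (i,j) = M $$ (i, pick P j)" if "i < m" "j < n" for i j
  proof -
    have q: "pick P j < m" using pickP[OF that(2)] Psub by auto
    have "(M * Bm) $$ (i,j) = (\<Sum>k\<in>{0..<m}. M $$ (i,k) * (if k = pick P j then 1 else 0))"
      using that Mc by (simp add: Bm_def scalar_prod_def)
    also have "\<dots> = (\<Sum>k\<in>{0..<m}. if k = pick P j then M $$ (i,k) else 0)"
      by (rule sum.cong) auto
    also have "\<dots> = M $$ (i, pick P j)" using q by simp
    finally show ?thesis .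
  qed
  have JE: "J = Cm * (M * Bm)"
  proof (rule eq_matI)
    show "dim_row J = dim_row (Cm * (M * Bm))" unfolding J_def using Wc cY n_def
      by (simp add: dim_submatrix Cm_def)
    show "dim_col J = dim_col (Cm * (M * Bm))" unfolding J_def using Mc cP cardP
      by (simp add: dim_submatrix Bm_def)
    fix i j assume i: "i < dim_row (Cm * (M * Bm))" and j: "j < dim_col (Cm * (M * Bm))"
    then have i': "i < n" and j': "j < n" using Cmc Bc Mc by auto
    have "J $$ (i,j) = (W * M) $$ (pick Y i, pick P j)" unfolding J_def
      by (rule submatrix_index) (use i' j' Wc Mc cY cP n_def cardP in auto)
    also have "\<dots> = (\<Sum>l\<in>{0..<m}. W $$ (pick Y i, l) * M $$ (l, pick P j))"
    proof -
      have "pick Y i < m" "pick P j < m" using pickY[OF i'] pickP[OF j'] Ysub Psub by auto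
      then show ?thesis using Wc Mc by (simp add: scalar_prod_def)
    qed
    also have "\<dots> = (\<Sum>l\<in>{0..<m}. Cm $$ (i,l) * (M * Bm) $$ (l,j))"
      using i' j' by (intro sum.cong) (auto simp: Cm_def MBe)
    also have "\<dots> = row Cm i \<bullet> col (M * Bm) j"
      using i' j' Mc Bc Cmc by (simp add: scalar_prod_def)
    also have "\<dots> = (Cm * (M * Bm)) $$ (i,j)"
      using i' j' Mc Bc Cmc by (intro index_mult_mat(1)[symmetric]) auto
    finally show "J $$ (i,j) = (Cm * (M * Bm)) $$ (i,j)" .
  qed
  define N where "N = four_block_mat A Bm Cm (0\<^sub>m n n)"
  have dN: "det N \<noteq> 0" unfolding N_def
    by (rule block_det_nonzero[OF Ac Mc AM Bc Cmc]) (use dJ JE in simp)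
  have Nc: "N \<in> carrier_mat (m+n) (m+n)" unfolding N_def using Ac by simp
  obtain pi where perm: "pi permutes {0..<m+n}" and nz: "\<And>i. i < m+n \<Longrightarrow> N $$ (i, pi i) \<noteq> 0"
  proof -
    from dN have "(\<Sum> p \<in> {p. p permutes {0 ..< m+n}}. signof p * (\<Prod> i = 0 ..< m+n. N $$ (i, p i))) \<noteq> 0"
      using det_def'[OF Nc] by simp
    then obtain p where p: "p permutes {0..<m+n}" and "signof p * (\<Prod> i = 0 ..< m+n. N $$ (i, p i)) \<noteq> 0"
      by (rule sum.not_neutral_contains_not_neutral) auto
    then have "(\<Prod> i = 0 ..< m+n. N $$ (i, p i)) \<noteq> 0" by auto
    then have "\<And>i. i < m+n \<Longrightarrow> N $$ (i, p i) \<noteq> 0" by (simp add: prod_zero_iff)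
    then show ?thesis using that p by blast
  qed
  have piR: "pi i < m+n" if "i < m+n" for i using permutes_in_image[OF perm] that by auto
  have dA: "dim_row A = m" "dim_col A = m" using Ac by auto
  have E3: "pi (m+k) < m" if k: "k < n" for k
  proof (rule ccontr)
    assume "\<not> pi (m+k) < m"
    then have "N $$ (m+k, pi (m+k)) = 0" unfolding N_def using piR[of "m+k"] k dA by simp
    then show False using nz[of "m+k"] k by simp
  qed
  have E4: "W $$ (pick Y k, pi (m+k)) \<noteq> 0" if k: "k < n" for k
  proof -
    have "N $$ (m+k, pi (m+k)) = W $$ (pick Y k, pi (m+k))"
      unfolding N_def using E3[OF k] k dA by (simp add: Cm_def)
    then show ?thesis using nz[of "m+k"] k by simp
  qed
  have E1: "(i, pi i) \<in> D" if "i < m" "pi i < m" "pi i \<noteq> i" for i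
  proof (rule ccontr)
    assume "(i, pi i) \<notin> D"
    then have "L $$ (i, pi i) = 0" using Lz that by blast
    then have "N $$ (i, pi i) = 0" unfolding N_def using that dA Lc by (simp add: A_def)
    then show False using nz[of i] that by simp
  qed
  have E2: "i = pick P (pi i - m)" if "i < m" "m \<le> pi i" for i
  proof (rule ccontr)
    assume a: "i \<noteq> pick P (pi i - m)"
    have "pi i < m + n" using piR that by simp
    then have "N $$ (i, pi i) = 0" unfolding N_def using that dA a by (simp add: Bm_def)
    then show False using nz[of i] that by simp
  qed
  have E3all: "\<forall>k<n. pi (m+k) < m" using E3 by blast
  have bij: "bij pi" using perm by (rule permutes_bij)
  define t where "t k = (LEAST s. 0 < s \<and> m \<le> (pi^^s) (m+k))" for k
  have T1: "2 \<le> t k" and T2: "m \<le> (pi^^t k)(m+k)" and T3: "\<And>s. 0<s \<Longrightarrow> s<t k \<Longrightarrow> (pi^^s)(m+k) < m"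
    if "k < n" for k
    using exit_time[OF perm E3all that] unfolding t_def by auto
  define ps where "ps k = map (\<lambda>i. (pi^^Suc i) (m+k)) [0..<t k - 1]" for k
  have ps_len: "length (ps k) = t k - 1" for k unfolding ps_def by simp
  have ps_nth: "ps k ! i = (pi^^Suc i) (m+k)" if "i < t k - 1" for k i
    unfolding ps_def using that by simp
  have ps_ne: "ps k \<noteq> []" if "k < n" for k using T1[OF that] ps_len[of k] by auto
  have ps_set: "\<exists>s. 0 < s \<and> s < t k \<and> x = (pi^^s) (m+k)" if xin: "x \<in> set (ps k)" for k x
  proof -
    obtain i where i: "i < length (ps k)" "x = ps k ! i" using xin unfolding in_set_conv_nth by blast
    then have "i < t k - 1" "x = (pi^^Suc i) (m+k)" using ps_nth ps_len by auto
    then show ?thesis by (intro exI[of _ "Suc i"]) (simp del: funpow.simps)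
  qed
  have ps_lt: "x < m" if "k < n" "x \<in> set (ps k)" for k x
    using ps_set[OF that(2)] T3[OF that(1)] by auto
  have ps_hd: "hd (ps k) = pi (m+k)" if "k < n" for k
    using ps_nth[of 0 k] T1[OF that] ps_ne[OF that] by (simp add: hd_conv_nth)
  have ps_last: "last (ps k) = (pi^^(t k - 1)) (m+k)" if "k < n" for k
  proof -
    have "last (ps k) = ps k ! (t k - 2)" using ps_ne[OF that] ps_len[of k] by (simp add: last_conv_nth numeral_2_eq_2)
    also have "\<dots> = (pi^^Suc (t k - 2)) (m+k)" using ps_nth[of "t k - 2" k] T1[OF that] by simp
    also have "Suc (t k - 2) = t k - 1" using T1[OF that] by simp
    finally show ?thesis .
  qed
  have ps_lastP: "last (ps k) \<in> P" if k: "k < n" for k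
  proof -
    have l: "last (ps k) < m" using ps_lt[OF k] last_in_set[OF ps_ne[OF k]] by blast
    have "pi (last (ps k)) = (pi^^Suc (t k - 1)) (m+k)" using ps_last[OF k] by simp
    also have "Suc (t k - 1) = t k" using T1[OF k] by simp
    finally have "pi (last (ps k)) = (pi^^t k) (m+k)" .
    then have g: "m \<le> pi (last (ps k))" using T2[OF k] by simp
    have "pi (last (ps k)) < m + n" using piR l by simp
    then have "pi (last (ps k)) - m < n" using g by simp
    then show ?thesis using E2[OF l g] pickP by metis
  qed
  have ps_walk: "directed_walk D (ps k)" if k: "k < n" for k
    unfolding directed_walk_def
  proof (intro allI impI)
    fix i assume i: "Suc i < length (ps k)"
    define x where "x = (pi^^Suc i) (m+k)"
    have e1: "ps k ! i = x" using ps_nth[of i k] i ps_len[of k] x_def by simp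
    have e2: "ps k ! Suc i = pi x" using ps_nth[of "Suc i" k] i ps_len[of k] x_def by simp
    have xl: "x < m" using ps_lt[OF k] e1 i by (metis Suc_lessD nth_mem)
    have pxl: "pi x < m" using ps_lt[OF k] e2 i by (metis nth_mem)
    have "pi x \<noteq> x"
    proof
      assume "pi x = x"
      then have "(pi^^Suc i) (pi (m+k)) = (pi^^Suc i) (m+k)" unfolding x_def
        by (metis comp_apply funpow_Suc_right funpow.simps(2))
      moreover have "inj (pi^^Suc i)" using bij_fn[OF bij] bij_is_inj by blast
      ultimately have "pi (m+k) = m+k" by (metis injD)
      then show False using E3[OF k] by simp
    qed
    then show "(ps k ! i, ps k ! Suc i) \<in> D" using E1[OF xl pxl] e1 e2 by simp
  qed
  define idx where "idx y = card {a\<in>Y. a < y}" for y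
  have idx_lt: "idx y < n" if "y \<in> Y" for y
  proof -
    have "{a\<in>Y. a < y} \<subset> Y" using that by auto
    then show ?thesis unfolding idx_def n_def using finY psubset_card_mono by blast
  qed
  have idx_pick: "pick Y (idx y) = y" if "y \<in> Y" for y
    unfolding idx_def using pick_card_in_set that by blast
  define h where "h y = (pi (m + idx y) \<noteq> y, ps (idx y))" for y
  define tgt where "tgt y = last (ps (idx y))" for y
  have ht: "is_half_trek D B y (tgt y) (h y)" if y: "y \<in> Y" for y
  proof -
    let ?k = "idx y"
    have k: "?k < n" using idx_lt[OF y] .
    have yl: "y < m" using y Ysub by auto
    have x0l: "pi (m + ?k) < m" using E3[OF k] .
    have Wnz: "W $$ (y, pi (m + ?k)) \<noteq> 0" using E4[OF k] idx_pick[OF y] by simp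
    have bi: "(y, pi (m + ?k)) \<in> B" if "pi (m + ?k) \<noteq> y"
    proof (rule ccontr)
      assume "(y, pi (m + ?k)) \<notin> B"
      then have "W $$ (y, pi (m + ?k)) = 0" using Wz[rule_format, OF yl x0l] that by simp
      then show False using Wnz by simp
    qed
    show ?thesis unfolding is_half_trek_def h_def tgt_def Let_def
      using ps_ne[OF k] ps_walk[OF k] ps_hd[OF k] bi by auto
  qed
  have disj: "set (ps (idx y1)) \<inter> set (ps (idx y2)) = {}" if "y1 \<in> Y" "y2 \<in> Y" "y1 \<noteq> y2" for y1 y2
  proof (rule ccontr)
    assume "set (ps (idx y1)) \<inter> set (ps (idx y2)) \<noteq> {}"
    then obtain x where x1: "x \<in> set (ps (idx y1))" and x2: "x \<in> set (ps (idx y2))" by blast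
    obtain a where a: "0 < a" "a < t (idx y1)" "x = (pi^^a) (m + idx y1)" using ps_set[OF x1] by blast
    obtain b where b: "0 < b" "b < t (idx y2)" "x = (pi^^b) (m + idx y2)" using ps_set[OF x2] by blast
    have lt1: "(pi^^s)(m + idx y1) < m" if "0<s" "s<t (idx y1)" for s
      using T3[OF idx_lt[OF \<open>y1 \<in> Y\<close>]] that by blast
    have lt2: "(pi^^s)(m + idx y2) < m" if "0<s" "s<t (idx y2)" for s
      using T3[OF idx_lt[OF \<open>y2 \<in> Y\<close>]] that by blast
    have eqx: "(pi^^a)(m + idx y1) = (pi^^b)(m + idx y2)" by (rule trans[OF sym[OF a(3)] b(3)])
    have "idx y1 = idx y2"
      by (rule orbit_disjoint[OF perm lt1 lt2 a(1,2) b(1,2) eqx])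
    then show False using idx_pick that by metis
  qed
  have tgt_in: "tgt y \<in> set (ps (idx y))" if "y \<in> Y" for y
    unfolding tgt_def by (rule last_in_set[OF ps_ne[OF idx_lt[OF that]]])
  have inj: "inj_on tgt Y"
  proof (rule inj_onI)
    fix y1 y2 assume "y1 \<in> Y" "y2 \<in> Y" "tgt y1 = tgt y2"
    show "y1 = y2"
    proof (rule ccontr)
      assume "y1 \<noteq> y2"
      then have "set (ps (idx y1)) \<inter> set (ps (idx y2)) = {}" using disj \<open>y1 \<in> Y\<close> \<open>y2 \<in> Y\<close> by simp
      moreover have "tgt y1 \<in> set (ps (idx y1))" using tgt_in \<open>y1 \<in> Y\<close> by simp
      moreover have "tgt y2 \<in> set (ps (idx y2))" using tgt_in \<open>y2 \<in> Y\<close> by simp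
      ultimately show False using \<open>tgt y1 = tgt y2\<close> by auto
    qed
  qed
  have img: "tgt ` Y \<subseteq> P"
  proof
    fix x assume "x \<in> tgt ` Y"
    then obtain y where "y \<in> Y" "x = tgt y" by auto
    then show "x \<in> P" unfolding tgt_def using ps_lastP[OF idx_lt[OF \<open>y \<in> Y\<close>]] by simp
  qed
  have "card (tgt ` Y) = card P" using card_image[OF inj] cardP n_def by simp
  then have "tgt ` Y = P" using card_subset_eq[OF finP img] by simp
  then have bij_t: "bij_betw tgt Y P" using inj unfolding bij_betw_def by simp
  have nsi: "nsi_half_trek_system D B Y P"
    unfolding nsi_half_trek_system_def
  proof (intro exI[of _ h] exI[of _ tgt] conjI ballI impI)
    show "bij_betw tgt Y P" by (rule bij_t)
    fix x assume "x \<in> Y" then show "is_half_trek D B x (tgt x) (h x)" by (rule ht)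
  next
    fix x1 x2 assume "x1 \<in> Y" "x2 \<in> Y" "x1 \<noteq> x2"
    then show "left_side x1 (h x1) \<inter> left_side x2 (h x2) = {}" unfolding left_side_def by auto
    show "right_side x1 (h x1) \<inter> right_side x2 (h x2) = {}"
      unfolding right_side_def h_def using disj \<open>x1 \<in> Y\<close> \<open>x2 \<in> Y\<close> \<open>x1 \<noteq> x2\<close> by simp
  qed
  show ?thesis unfolding HTC_def using assms(3,4) nsi unfolding P_def by auto
qed

end
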